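(* (1) Let $\mathbb{F}=\langle x_1,\dots,x_n,y_1,\dots,y_m\rangle$ be free, $e\in\langle y_1,\dots,y_m\rangle$, and $\rho\in\mathcal{R}(\mathbb{F})=\mathrm{Hom}(\mathbb{F},SL(2,\mathbb{C}))$ with $\operatorname{trace}(\rho(e))\neq -2$. Let $S=(U,\widetilde U,P)$ be a standard neighborhood of $\rho(e)$ and let $V\subset\mathcal{R}(\mathbb{F})$ be an open neighborhood of $\rho$ with $\mathrm{ev}_e(V)\subset U$. Then the map $\tau_H\colon V\times P\to\mathcal{R}(\mathbb{F})$ given by $\tau_H(\eta,z)(x_i)=\eta(x_i)$ and $\tau_H(\eta,z)(y_j)=$ the conjugate of $\eta(y_j)$ by $\exp(z\cdot\log(\eta(e)))$, is holomorphic. (2) Let $\mathbb{F}=\langle x_1,\dots,x_{n-1}\rangle*\langle t\rangle$, $e\in\langle x_1,\dots,x_{n-1}\rangle$, $\rho\in\mathcal{R}(\mathbb{F})$ with $\operatorname{trace}(\rho(e))\neq-2$, and $S=(U,\widetilde U,P)$, $V$ as in (1). Then the map $\tau_H\colon V\times P\to\mathcal{R}(\mathbb{F})$ given by $\tau_H(\eta,z)(x_i)=\eta(x_i)$, $\tau_H(\eta,z)(t)=\eta(t)\exp(z\cdot\log(\eta(e)))$, is holomorphic.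
   Context: $\mathcal{R}(\mathbb{F})=\mathrm{Hom}(\mathbb{F},SL(2,\mathbb{C}))\cong SL(2,\mathbb{C})^{r}\subset\mathbb{C}^{4r}$ for $\mathbb{F}$ free of rank $r$, and $\mathrm{ev}_g\colon\mathcal{R}(\mathbb{F})\to SL(2,\mathbb{C})$, $\eta\mapsto\eta(g)$. For $\epsilon>0$, $P_\epsilon$ is the $\epsilon$-neighborhood of $[0,1]$ in $\mathbb{C}$. A standard neighborhood of $g\in SL(2,\mathbb{C})$ (with $\operatorname{trace}g\ne-2$) is a tuple $(U_g,\widetilde U_g,P)$ where $P=P_\epsilon$, $\widetilde U_g\subset\mathfrak{sl}_2\mathbb{C}$ is an open neighborhood of some $v_g$ with $\exp(v_g)=g$, $U_g=\exp(\widetilde U_g)$, $\exp(P\cdot\widetilde U_g)\subset SL(2,\mathbb{C})\setminus\{-I\}$, $\exp$ restricted to the $\epsilon$-neighborhood of $\{sv_g:s\in[0,1]\}$ is biholomorphic onto its image, and $P\cdot\widetilde U_g$ is contained in that neighborhood. For $h\in U_g$, $\log(h)$ denotes the unique $v\in\widetilde U_g$ with $\exp(v)=h$. *)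

theory Defs
  imports "HOL-Analysis.Analysis"
begin

class complex_space = real_normed_vector +
  fixes cscale :: "complex \<Rightarrow> 'a \<Rightarrow> 'a"

instantiation complex :: complex_space
begin
definition cscale_complex :: "complex \<Rightarrow> complex \<Rightarrow> complex" where
  "cscale_complex c z = c * z"
instance ..
end

instantiation vec :: (complex_space, finite) complex_space
begin
definition cscale_vec :: "complex \<Rightarrow> ('a, 'b) vec \<Rightarrow> ('a, 'b) vec" where
  "cscale_vec c v = (\<chi> i. cscale c (v $ i))"
instance ..
end

instantiation prod :: (complex_space, complex_space) complex_space
begin
definition cscale_prod :: "complex \<Rightarrow> 'a \<times> 'b \<Rightarrow> 'a \<times> 'b" where
  "cscale_prod c p = (cscale c (fst p), cscale c (snd p))"
instance ..
end

definition C_linear :: "('a::complex_space \<Rightarrow> 'b::complex_space) \<Rightarrow> bool" where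
  "C_linear L \<longleftrightarrow> linear L \<and> (\<forall>c x. L (cscale c x) = cscale c (L x))"

definition holo_open :: "('a::complex_space \<Rightarrow> 'b::complex_space) \<Rightarrow> 'a set \<Rightarrow> bool" where
  "holo_open f W \<longleftrightarrow> open W \<and>
     (\<forall>x\<in>W. \<exists>D. (f has_derivative D) (at x) \<and> C_linear D)"

text \<open>Holomorphic on an arbitrary subset A (e.g. an open subset of an analytic
subvariety): locally the restriction of a holomorphic map on an open set.\<close>
definition holo_on :: "('a::complex_space \<Rightarrow> 'b::complex_space) \<Rightarrow> 'a set \<Rightarrow> bool" where
  "holo_on f A \<longleftrightarrow> (\<forall>x\<in>A. \<exists>W g. open W \<and> x \<in> W \<and> holo_open g W \<and>
                        (\<forall>y\<in>A \<inter> W. g y = f y))"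

definition biholo_onto :: "('a::complex_space \<Rightarrow> 'b::complex_space) \<Rightarrow> 'a set \<Rightarrow> bool" where
  "biholo_onto f A \<longleftrightarrow> inj_on f A \<and> holo_on f A \<and> holo_on (the_inv_into A f) (f ` A)"

type_synonym mat2 = "complex^2^2"

definition smat :: "complex \<Rightarrow> mat2 \<Rightarrow> mat2" where
  "smat c A = (\<chi> i j. c * A $ i $ j)"

primrec mpow :: "mat2 \<Rightarrow> nat \<Rightarrow> mat2" where
  "mpow A 0 = mat 1"
| "mpow A (Suc k) = A ** mpow A k"

definition mexp :: "mat2 \<Rightarrow> mat2" where
  "mexp A = (\<Sum>k. smat (inverse (fact k)) (mpow A k))"

definition SL2 :: "mat2 set" where
  "SL2 = {A. det A = 1}"

definition sl2 :: "mat2 set" where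
  "sl2 = {A. trace A = 0}"

text \<open>An element is given by
a word: a list of letters (generator, True) = g and (generator, False) = g^-1.
The representation variety R(F) = Hom(F, SL(2,C)) = SL(2,C)^r is the set of
tuples of SL(2,C) matrices indexed by the generators, inside C^(4r).\<close>

type_synonym 'a word = "('a \<times> bool) list"

definition Rvar :: "(mat2^'a::finite) set" where
  "Rvar = {\<eta>. \<forall>g. \<eta> $ g \<in> SL2}"

definition ev :: "'a word \<Rightarrow> mat2^'a::finite \<Rightarrow> mat2" where
  "ev w \<eta> = foldr (\<lambda>(g, b) M. (if b then \<eta> $ g else matrix_inv (\<eta> $ g)) ** M) w (mat 1)"

definition word_in :: "'a word \<Rightarrow> 'a set \<Rightarrow> bool" where
  "word_in w Y \<longleftrightarrow> (\<forall>l\<in>set w. fst l \<in> Y)"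

definition Pnbhd :: "real \<Rightarrow> complex set" where
  "Pnbhd \<epsilon> = {z. \<exists>s\<in>{0..1::real}. dist z (complex_of_real s) < \<epsilon>}"

definition PU :: "complex set \<Rightarrow> mat2 set \<Rightarrow> mat2 set" where
  "PU P Ut = {smat z v | z v. z \<in> P \<and> v \<in> Ut}"

definition std_nbhd :: "mat2 \<Rightarrow> mat2 set \<Rightarrow> mat2 set \<Rightarrow> real \<Rightarrow> bool" where
  "std_nbhd g U Ut \<epsilon> \<longleftrightarrow> \<epsilon> > 0 \<and>
     (\<exists>v. v \<in> Ut \<and> mexp v = g \<and>
        Ut \<subseteq> sl2 \<and> openin (top_of_set sl2) Ut \<and>
        U = mexp ` Ut \<and>
        mexp ` PU (Pnbhd \<epsilon>) Ut \<subseteq> SL2 - {- mat 1} \<and>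
        (let N = {w \<in> sl2. \<exists>s\<in>{0..1::real}. dist w (smat (complex_of_real s) v) < \<epsilon>}
         in biholo_onto mexp N \<and> PU (Pnbhd \<epsilon>) Ut \<subseteq> N))"

definition logS :: "mat2 set \<Rightarrow> mat2 \<Rightarrow> mat2" where
  "logS Ut h = (THE v. v \<in> Ut \<and> mexp v = h)"

definition conjm :: "mat2 \<Rightarrow> mat2 \<Rightarrow> mat2" where
  "conjm A B = A ** B ** matrix_inv A"

end

theory Submission
  imports Defs
begin


lemma bl_vec_lambda:
  fixes f' :: "'a::real_normed_vector \<Rightarrow> 'b::real_normed_vector^'n::finite"
  assumes "\<And>i. bounded_linear (\<lambda>h. f' h $ i)"
  shows "bounded_linear f'"
proof -
  have lin: "linear f'"
    unfolding linear_iff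
    using assms[THEN bounded_linear.linear, THEN linear_add] assms[THEN bounded_linear.linear, THEN linear_scale]
    by (simp add: vec_eq_iff)
  have "\<forall>i. \<exists>Ki. \<forall>h. norm (f' h $ i) \<le> norm h * Ki"
    using bounded_linear.bounded[OF assms] by blast
  from choice[OF this] obtain K where K: "\<And>i h. norm (f' h $ i) \<le> norm h * K i"
    by blast
  show ?thesis
  proof (rule bounded_linear_intro[where K="sum K UNIV"])
    show "f' (x + y) = f' x + f' y" for x y using lin by (simp add: linear_add)
    show "f' (r *\<^sub>R x) = r *\<^sub>R f' x" for r x using lin by (simp add: linear_scale)
    show "norm (f' x) \<le> norm x * sum K UNIV" for x
    proof -
      have "norm (f' x) \<le> (\<Sum>i\<in>UNIV. norm (f' x $ i))" by (simp add: norm_vec_def L2_set_le_sum)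
      also have "\<dots> \<le> (\<Sum>i\<in>UNIV. norm x * K i)" by (rule sum_mono) (rule K)
      finally show ?thesis by (simp add: sum_distrib_left)
    qed
  qed
qed

lemma has_derivative_vec_lambda:
  fixes f :: "'a::real_normed_vector \<Rightarrow> 'b::real_normed_vector^'n::finite"
  assumes "\<And>i. ((\<lambda>x. f x $ i) has_derivative (\<lambda>h. f' h $ i)) F"
  shows "(f has_derivative f') F"
  unfolding has_derivative_def
proof
  show "bounded_linear f'" using assms by (intro bl_vec_lambda) (auto simp: has_derivative_def)
  show "((\<lambda>y. (f y - f (Lim F (\<lambda>x. x)) - f' (y - Lim F (\<lambda>x. x))) /\<^sub>R norm (y - Lim F (\<lambda>x. x))) \<longlongrightarrow> 0) F"
    apply (rule vec_tendstoI)
    using assms unfolding has_derivative_def by simp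
qed



definition hdc :: "('a::complex_space \<Rightarrow> 'b::complex_space) \<Rightarrow> 'a \<Rightarrow> bool" where
  "hdc f x \<longleftrightarrow> (\<exists>D. (f has_derivative D) (at x) \<and> C_linear D)"

lemma hdc_id: "hdc (\<lambda>y. y) x"
  unfolding hdc_def C_linear_def by (auto intro!: exI[of _ "\<lambda>h. h"] has_derivative_ident simp: linear_iff)

lemma hdc_comp: "hdc f x \<Longrightarrow> hdc g (f x) \<Longrightarrow> hdc (\<lambda>y. g (f y)) x"
  unfolding hdc_def C_linear_def
proof (elim exE conjE)
  fix D E assume 1: "(f has_derivative D) (at x)" "linear D" "\<forall>c x. D (cscale c x) = cscale c (D x)"
    and 2: "(g has_derivative E) (at (f x))" "linear E" "\<forall>c x. E (cscale c x) = cscale c (E x)"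
  show "\<exists>D. ((\<lambda>y. g (f y)) has_derivative D) (at x) \<and> linear D \<and> (\<forall>c x. D (cscale c x) = cscale c (D x))"
    using diff_chain_at[OF 1(1) 2(1)] 1 2 linear_compose[OF 1(2) 2(2)]
    by (intro exI[of _ "E \<circ> D"]) (auto simp: comp_def)
qed

lemma hdc_fst: "hdc fst x"
  unfolding hdc_def C_linear_def
  by (auto intro!: exI[of _ fst] has_derivative_fst[OF has_derivative_ident] simp: cscale_prod_def
      bounded_linear_fst bounded_linear.linear)

lemma hdc_snd: "hdc snd x"
  unfolding hdc_def C_linear_def
  by (auto intro!: exI[of _ snd] has_derivative_snd[OF has_derivative_ident] simp: cscale_prod_def
      bounded_linear_snd bounded_linear.linear)

lemma hdc_pair: "hdc f x \<Longrightarrow> hdc g x \<Longrightarrow> hdc (\<lambda>y. (f y, g y)) x"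
  unfolding hdc_def C_linear_def
proof (elim exE conjE)
  fix D E assume 1: "(f has_derivative D) (at x)" "linear D" "\<forall>c x. D (cscale c x) = cscale c (D x)"
    and 2: "(g has_derivative E) (at x)" "linear E" "\<forall>c x. E (cscale c x) = cscale c (E x)"
  have "linear (\<lambda>h. (D h, E h))" using 1(2) 2(2) unfolding linear_iff by auto
  then show "\<exists>D. ((\<lambda>y. (f y, g y)) has_derivative D) (at x) \<and> linear D \<and> (\<forall>c x. D (cscale c x) = cscale c (D x))"
    using has_derivative_Pair[OF 1(1) 2(1)] 1 2
    by (intro exI[of _ "\<lambda>h. (D h, E h)"]) (auto simp: cscale_prod_def)
qed

lemma hdc_nth: "hdc f x \<Longrightarrow> hdc (\<lambda>y. f y $ i) x"
  unfolding hdc_def C_linear_def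
proof (elim exE conjE)
  fix D assume 1: "(f has_derivative D) (at x)" "linear D" "\<forall>c x. D (cscale c x) = cscale c (D x)"
  have "linear (\<lambda>h. D h $ i)" using 1(2) unfolding linear_iff by auto
  moreover have "((\<lambda>y. f y $ i) has_derivative (\<lambda>h. D h $ i)) (at x)"
    using bounded_linear.has_derivative[OF bounded_linear_vec_nth 1(1)] .
  ultimately show "\<exists>D. ((\<lambda>y. f y $ i) has_derivative D) (at x) \<and> linear D \<and> (\<forall>c x. D (cscale c x) = cscale c (D x))"
    using 1 by (intro exI[of _ "\<lambda>h. D h $ i"]) (auto simp: cscale_vec_def)
qed

lemma hdc_vec: "(\<And>i. hdc (\<lambda>y. F y i) x) \<Longrightarrow> hdc (\<lambda>y. \<chi> i. F y i) x"
proof -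
  assume "\<And>i. hdc (\<lambda>y. F y i) x"
  then obtain D where D: "\<And>i. ((\<lambda>y. F y i) has_derivative D i) (at x)" "\<And>i. linear (D i)"
    "\<And>i c h. D i (cscale c h) = cscale c (D i h)"
    unfolding hdc_def C_linear_def by metis
  have "linear (\<lambda>h. \<chi> i. D i h)" using D(2) unfolding linear_iff by (auto simp: vec_eq_iff)
  moreover have "((\<lambda>y. \<chi> i. F y i) has_derivative (\<lambda>h. \<chi> i. D i h)) (at x)"
    by (rule has_derivative_vec_lambda) (simp add: D(1))
  ultimately show ?thesis unfolding hdc_def C_linear_def
    by (intro exI[of _ "\<lambda>h. \<chi> i. D i h"]) (auto simp: cscale_vec_def D(3))
qed

lemma hdc_const: "hdc (\<lambda>y. c::complex) x"
  unfolding hdc_def C_linear_def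
  by (auto intro!: exI[of _ "\<lambda>h. 0"] simp: cscale_complex_def linear_iff)

lemma hdc_mult: "hdc (f::_\<Rightarrow>complex) x \<Longrightarrow> hdc g x \<Longrightarrow> hdc (\<lambda>y. f y * g y) x"
  unfolding hdc_def C_linear_def
proof (elim exE conjE)
  fix D E assume 1: "(f has_derivative D) (at x)" "linear D" "\<forall>c x. D (cscale c x) = cscale c (D x)"
    and 2: "(g has_derivative E) (at x)" "linear E" "\<forall>c x. E (cscale c x) = cscale c (E x)"
  have d: "((\<lambda>y. f y * g y) has_derivative (\<lambda>h. f x * E h + D h * g x)) (at x)"
    using has_derivative_mult[OF 1(1) 2(1)] .
  have "linear (\<lambda>h. f x * E h + D h * g x)" using d has_derivative_linear by blast
  then show "\<exists>D. ((\<lambda>y. f y * g y) has_derivative D) (at x) \<and> linear D \<and> (\<forall>c x. D (cscale c x) = cscale c (D x))"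
    using d 1 2 by (intro exI[of _ "\<lambda>h. f x * E h + D h * g x"]) (auto simp: cscale_complex_def algebra_simps)
qed

lemma hdc_add: "hdc (f::_\<Rightarrow>complex) x \<Longrightarrow> hdc g x \<Longrightarrow> hdc (\<lambda>y. f y + g y) x"
  unfolding hdc_def C_linear_def
proof (elim exE conjE)
  fix D E assume 1: "(f has_derivative D) (at x)" "linear D" "\<forall>c x. D (cscale c x) = cscale c (D x)"
    and 2: "(g has_derivative E) (at x)" "linear E" "\<forall>c x. E (cscale c x) = cscale c (E x)"
  have d: "((\<lambda>y. f y + g y) has_derivative (\<lambda>h. D h + E h)) (at x)"
    using has_derivative_add[OF 1(1) 2(1)] .
  have "linear (\<lambda>h. D h + E h)" using d has_derivative_linear by blast
  then show "\<exists>D. ((\<lambda>y. f y + g y) has_derivative D) (at x) \<and> linear D \<and> (\<forall>c x. D (cscale c x) = cscale c (D x))"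
    using d 1 2 by (intro exI[of _ "\<lambda>h. D h + E h"]) (auto simp: cscale_complex_def algebra_simps)
qed

lemma hdc_neg: "hdc (f::_\<Rightarrow>complex) x \<Longrightarrow> hdc (\<lambda>y. - f y) x"
  using hdc_mult[OF hdc_const[of "-1"], of f x] by simp

lemma hdc_sum: "finite A \<Longrightarrow> (\<And>k. k \<in> A \<Longrightarrow> hdc (\<lambda>y. F y k :: complex) x) \<Longrightarrow> hdc (\<lambda>y. \<Sum>k\<in>A. F y k) x"
  by (induction A rule: finite_induct) (auto intro: hdc_add hdc_const)

lemma hdc_mmult:
  fixes f g :: "'a::complex_space \<Rightarrow> complex^'n::finite^'n"
  shows "hdc f x \<Longrightarrow> hdc g x \<Longrightarrow> hdc (\<lambda>y. f y ** g y) x"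
  unfolding matrix_matrix_mult_def
  apply (rule hdc_vec, rule hdc_vec, rule hdc_sum, simp)
  apply (rule hdc_mult; rule hdc_nth; rule hdc_nth; assumption)
  done

lemma hdc_smat: "hdc f x \<Longrightarrow> hdc g x \<Longrightarrow> hdc (\<lambda>y. smat (f y) (g y)) x"
  unfolding smat_def
  apply (rule hdc_vec, rule hdc_vec)
  apply (rule hdc_mult, assumption; rule hdc_nth; rule hdc_nth; assumption)
  done

lemma hdc_mat1: "hdc (\<lambda>y. mat 1 :: complex^'n::finite^'n) x"
  unfolding mat_def by (rule hdc_vec, rule hdc_vec, rule hdc_const)

lemma hdc_cong: "hdc f x \<Longrightarrow> (\<And>y. f y = g y) \<Longrightarrow> hdc g x"
proof -
  assume "hdc f x" "\<And>y. f y = g y"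
  then have "f = g" by auto
  with \<open>hdc f x\<close> show ?thesis by simp
qed



definition adj2 :: "mat2 \<Rightarrow> mat2" where
  "adj2 A = (\<chi> i j. if i = 1 then (if j = 1 then A$2$2 else - A$1$2)
                     else (if j = 1 then - A$2$1 else A$1$1))"

lemma adj2_right: "det A = 1 \<Longrightarrow> A ** adj2 A = mat 1"
  by (simp add: vec_eq_iff forall_2 sum_2 adj2_def matrix_matrix_mult_def mat_def det_2 algebra_simps)

lemma adj2_left: "det A = 1 \<Longrightarrow> adj2 A ** A = mat 1"
  by (simp add: vec_eq_iff forall_2 sum_2 adj2_def matrix_matrix_mult_def mat_def det_2 algebra_simps)

lemma matrix_inv_adj2: assumes "det A = 1" shows "matrix_inv A = adj2 A"
proof -
  let ?P = "\<lambda>B. A ** B = mat 1 \<and> B ** A = mat 1"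
  have "?P (adj2 A)" using adj2_left adj2_right assms by auto
  then have P: "?P (matrix_inv A)" unfolding matrix_inv_def by (rule someI)
  have "matrix_inv A = matrix_inv A ** (A ** adj2 A)" using adj2_right[OF assms] by simp
  also have "\<dots> = (matrix_inv A ** A) ** adj2 A" by (simp add: matrix_mul_assoc)
  also have "\<dots> = adj2 A" using P by simp
  finally show ?thesis .
qed

lemma conjm_adj2: "det A = 1 \<Longrightarrow> conjm A B = A ** B ** adj2 A"
  unfolding conjm_def using matrix_inv_adj2[of A] by simp

lemma hdc_adj2: "hdc f x \<Longrightarrow> hdc (\<lambda>y. adj2 (f y)) x"
  unfolding adj2_def
  apply (rule hdc_vec, rule hdc_vec)
  subgoal for i j by (cases "i = 1"; cases "j = 1"; simp; (rule hdc_neg)?; rule hdc_nth; rule hdc_nth; assumption)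
  done

definition ev2 :: "'a word \<Rightarrow> mat2^'a::finite \<Rightarrow> mat2" where
  "ev2 w \<eta> = foldr (\<lambda>(g, b) M. (if b then \<eta> $ g else adj2 (\<eta> $ g)) ** M) w (mat 1)"

lemma hdc_ev2: "hdc (ev2 w) x"
proof (induction w)
  case Nil
  then show ?case unfolding ev2_def by (simp add: hdc_mat1)
next
  case (Cons a w)
  obtain g b where a: "a = (g, b)" by fastforce
  have h: "hdc (\<lambda>y. y $ g) x" by (rule hdc_nth[OF hdc_id])
  have "hdc (\<lambda>y. (if b then y $ g else adj2 (y $ g)) ** ev2 w y) x"
    by (cases b) (auto intro!: hdc_mmult Cons h hdc_adj2)
  then show ?case unfolding a by (simp add: ev2_def)
qed

lemma ev2_ev: "\<eta> \<in> Rvar \<Longrightarrow> ev2 w \<eta> = ev w \<eta>"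
  by (induction w) (auto simp: ev2_def ev_def Rvar_def SL2_def matrix_inv_adj2)

lemma hdc_cont: "hdc f x \<Longrightarrow> isCont f x"
  unfolding hdc_def using has_derivative_continuous by blast

lemma holo_open_hdc: "holo_open f W \<longleftrightarrow> open W \<and> (\<forall>x\<in>W. hdc f x)"
  unfolding holo_open_def hdc_def by simp



lemma key:
  fixes e :: "'a::finite word" and Fa F :: "mat2^'a \<Rightarrow> mat2 \<Rightarrow> mat2^'a"
  assumes std: "std_nbhd h U Ut \<epsilon>"
    and V: "openin (top_of_set Rvar) V" and evV: "ev e ` V \<subseteq> U"
    and Fh: "\<And>(G :: (mat2^'a) \<times> complex \<Rightarrow> mat2) x. hdc G x \<Longrightarrow> hdc (\<lambda>p. F (fst p) (G p)) x"
    and FF: "\<And>\<eta> A. \<eta> \<in> Rvar \<Longrightarrow> det A = 1 \<Longrightarrow> F \<eta> A = Fa \<eta> A"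
  shows "holo_on (\<lambda>(\<eta>, z). Fa \<eta> (mexp (smat z (logS Ut (ev e \<eta>))))) (V \<times> Pnbhd \<epsilon>)"
proof -
  define N where "N = {w \<in> sl2. \<exists>s\<in>{0..1::real}. dist w (smat (complex_of_real s) h) < \<epsilon>}"
  obtain v where epos: "\<epsilon> > 0" and UUt: "U = mexp ` Ut"
    and PUSL: "mexp ` PU (Pnbhd \<epsilon>) Ut \<subseteq> SL2 - {- mat 1}"
    and bih: "biholo_onto mexp {w \<in> sl2. \<exists>s\<in>{0..1::real}. dist w (smat (complex_of_real s) v) < \<epsilon>}"
    and PUN: "PU (Pnbhd \<epsilon>) Ut \<subseteq> {w \<in> sl2. \<exists>s\<in>{0..1::real}. dist w (smat (complex_of_real s) v) < \<epsilon>}"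
    using std unfolding std_nbhd_def Let_def by blast
  define N where "N = {w \<in> sl2. \<exists>s\<in>{0..1::real}. dist w (smat (complex_of_real s) v) < \<epsilon>}"
  have bih: "biholo_onto mexp N" and PUN: "PU (Pnbhd \<epsilon>) Ut \<subseteq> N" using bih PUN N_def by auto
  have inj: "inj_on mexp N" and hexp: "holo_on mexp N" and hlog: "holo_on (the_inv_into N mexp) (mexp ` N)"
    using bih unfolding biholo_onto_def by auto
  have oneP: "1 \<in> Pnbhd \<epsilon>" unfolding Pnbhd_def using epos by (auto intro!: bexI[of _ 1])
  have UtPU: "Ut \<subseteq> PU (Pnbhd \<epsilon>) Ut"
  proof
    fix w assume "w \<in> Ut"
    moreover have "smat 1 w = w" by (simp add: smat_def vec_eq_iff)
    ultimately show "w \<in> PU (Pnbhd \<epsilon>) Ut" unfolding PU_def using oneP by force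
  qed
  have UtN: "Ut \<subseteq> N" using UtPU PUN by auto
  have logS: "logS Ut (mexp w) = w" if "w \<in> Ut" for w
    unfolding logS_def
    by (rule the_equality) (use that UtN inj in \<open>auto dest: inj_onD\<close>)
  have ilog: "the_inv_into N mexp (mexp w) = w" if "w \<in> N" for w
    using the_inv_into_f_f[OF inj that] .
  have PUdet: "det (mexp (smat z w)) = 1" if "z \<in> Pnbhd \<epsilon>" "w \<in> Ut" for z w
  proof -
    have "smat z w \<in> PU (Pnbhd \<epsilon>) Ut" unfolding PU_def using that by blast
    then show ?thesis using PUSL unfolding SL2_def by auto
  qed
  have PUin: "smat z w \<in> N" if "z \<in> Pnbhd \<epsilon>" "w \<in> Ut" for z w
    using PUN that unfolding PU_def by blast
  obtain Oo where Oo: "open Oo" "V = Rvar \<inter> Oo" using V unfolding openin_open by blast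
  show ?thesis unfolding holo_on_def
  proof (intro ballI)
    fix p0 assume p0: "p0 \<in> V \<times> Pnbhd \<epsilon>"
    obtain \<eta>0 z0 where p0e: "p0 = (\<eta>0, z0)" "\<eta>0 \<in> V" "z0 \<in> Pnbhd \<epsilon>" using p0 by auto
    obtain L0 where L0: "L0 \<in> Ut" "ev e \<eta>0 = mexp L0" using evV p0e UUt by blast
    have "mexp L0 \<in> mexp ` N" using L0 UtN by auto
    then obtain Wl gl where Wl: "open Wl" "mexp L0 \<in> Wl" "holo_open gl Wl"
      "\<And>y. y \<in> mexp ` N \<inter> Wl \<Longrightarrow> gl y = the_inv_into N mexp y"
      using hlog unfolding holo_on_def by metis
    have "smat z0 L0 \<in> N" using PUin p0e L0 by auto
    then obtain We ge where We: "open We" "smat z0 L0 \<in> We" "holo_open ge We"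
      "\<And>y. y \<in> N \<inter> We \<Longrightarrow> ge y = mexp y"
      using hexp unfolding holo_on_def by metis
    define Mf where "Mf p = smat (snd p) (gl (ev2 e (fst p)))" for p :: "(mat2^'a) \<times> complex"
    define W1 where "W1 = (Oo \<times> (UNIV::complex set)) \<inter> ((\<lambda>p. ev2 e (fst p)) -` Wl)"
    have hev: "hdc (\<lambda>p. ev2 e (fst p)) p" for p :: "(mat2^'a) \<times> complex"
      by (rule hdc_comp[OF hdc_fst hdc_ev2])
    have "continuous_on UNIV (\<lambda>p::(mat2^'a) \<times> complex. ev2 e (fst p))"
      by (rule continuous_at_imp_continuous_on) (auto intro: hdc_cont[OF hev])
    then have "open ((\<lambda>p::(mat2^'a) \<times> complex. ev2 e (fst p)) -` Wl)"
      by (rule open_vimage[OF Wl(1)])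
    then have oW1: "open W1" unfolding W1_def using Oo(1) by (intro open_Int open_Times) auto
    have hMf: "hdc Mf p" if "p \<in> W1" for p
    proof -
      have "hdc gl (ev2 e (fst p))" using Wl(3) that unfolding W1_def holo_open_hdc by auto
      then have "hdc (\<lambda>p. gl (ev2 e (fst p))) p" by (rule hdc_comp[OF hev])
      then show ?thesis unfolding Mf_def by (intro hdc_smat hdc_snd)
    qed
    define W where "W = W1 \<inter> Mf -` We"
    have cM: "continuous_on W1 Mf"
      by (rule continuous_at_imp_continuous_on) (auto intro: hdc_cont hMf)
    then have "open (Mf -` We \<inter> W1)" using continuous_on_open_vimage[OF oW1] We(1) by blast
    then have oW: "open W" unfolding W_def by (simp add: Int_commute)
    define G where "G p = F (fst p) (ge (Mf p))" for p
    have hG: "hdc (\<lambda>p. ge (Mf p)) p" if "p \<in> W" for p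
    proof -
      have p1: "p \<in> W1" "Mf p \<in> We" using that unfolding W_def by auto
      then show ?thesis using hdc_comp[OF hMf[OF p1(1)], of ge] We(3) unfolding holo_open_hdc by blast
    qed
    have Gf: "G = (\<lambda>p. F (fst p) (ge (Mf p)))" by (simp add: G_def fun_eq_iff)
    have "holo_open G W" unfolding holo_open_hdc
    proof (intro conjI ballI oW)
      fix p assume "p \<in> W"
      show "hdc G p" unfolding Gf by (rule Fh[OF hG[OF \<open>p \<in> W\<close>]])
    qed
    moreover have "p0 \<in> W"
    proof -
      have e2: "ev2 e \<eta>0 = mexp L0" using L0 p0e Oo by (simp add: ev2_ev)
      have "gl (mexp L0) = L0" using Wl(4)[of "mexp L0"] Wl(2) L0 UtN ilog by auto
      then show ?thesis using e2 p0e Oo Wl(2) We(2) unfolding W_def W1_def Mf_def by auto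
    qed
    moreover have "\<forall>y\<in>(V \<times> Pnbhd \<epsilon>) \<inter> W. G y = (\<lambda>(\<eta>, z). Fa \<eta> (mexp (smat z (logS Ut (ev e \<eta>))))) y"
    proof
      fix y assume y: "y \<in> (V \<times> Pnbhd \<epsilon>) \<inter> W"
      obtain \<eta> z where ye: "y = (\<eta>, z)" "\<eta> \<in> V" "z \<in> Pnbhd \<epsilon>" "y \<in> W" using y by auto
      obtain L where L: "L \<in> Ut" "ev e \<eta> = mexp L" using evV ye UUt by blast
      have R: "\<eta> \<in> Rvar" using ye Oo by auto
      have e2: "ev2 e \<eta> = mexp L" using L R by (simp add: ev2_ev)
      have "ev2 e \<eta> \<in> Wl" using ye unfolding W_def W1_def by auto
      then have gL: "gl (mexp L) = L" using Wl(4)[of "mexp L"] e2 L UtN ilog by auto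
      have Mfy: "Mf y = smat z L" unfolding Mf_def using ye e2 gL by simp
      have "Mf y \<in> We" using ye unfolding W_def by auto
      then have "ge (Mf y) = mexp (smat z L)" using We(4) Mfy PUin[OF ye(3) L(1)] by auto
      then show "G y = (\<lambda>(\<eta>, z). Fa \<eta> (mexp (smat z (logS Ut (ev e \<eta>))))) y"
        unfolding G_def using ye L logS FF[OF R PUdet[OF ye(3) L(1)]] by simp
    qed
    ultimately show "\<exists>W g. open W \<and> p0 \<in> W \<and> holo_open g W \<and>
          (\<forall>y\<in>(V \<times> Pnbhd \<epsilon>) \<inter> W. g y = (\<lambda>(\<eta>, z). Fa \<eta> (mexp (smat z (logS Ut (ev e \<eta>))))) y)"
      using oW by blast
  qed
qed



theorem lemma3p4:
  fixes Y :: "'a::finite set" and e :: "'a word" and \<rho> :: "mat2^'a"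
    and U Ut :: "mat2 set" and \<epsilon> :: real and V :: "(mat2^'a) set"
    and t :: "'b::finite" and e' :: "'b word" and \<rho>' :: "mat2^'b"
    and U' Ut' :: "mat2 set" and \<epsilon>' :: real and V' :: "(mat2^'b) set"
  shows
  "(word_in e Y \<and> \<rho> \<in> Rvar \<and> trace (ev e \<rho>) \<noteq> -2 \<and>
     std_nbhd (ev e \<rho>) U Ut \<epsilon> \<and>
     openin (top_of_set Rvar) V \<and> \<rho> \<in> V \<and> ev e ` V \<subseteq> U
   \<longrightarrow> holo_on (\<lambda>(\<eta>, z). (\<chi> g. if g \<in> Y
                  then conjm (mexp (smat z (logS Ut (ev e \<eta>)))) (\<eta> $ g)
                  else \<eta> $ g)) (V \<times> Pnbhd \<epsilon>))
   \<and>
   (word_in e' (- {t}) \<and> \<rho>' \<in> Rvar \<and> trace (ev e' \<rho>') \<noteq> -2 \<and>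
     std_nbhd (ev e' \<rho>') U' Ut' \<epsilon>' \<and>
     openin (top_of_set Rvar) V' \<and> \<rho>' \<in> V' \<and> ev e' ` V' \<subseteq> U'
   \<longrightarrow> holo_on (\<lambda>(\<eta>, z). (\<chi> g. if g = t
                  then (\<eta> $ t) ** mexp (smat z (logS Ut' (ev e' \<eta>)))
                  else \<eta> $ g)) (V' \<times> Pnbhd \<epsilon>'))"
proof (intro conjI impI)
  assume a: "word_in e Y \<and> \<rho> \<in> Rvar \<and> trace (ev e \<rho>) \<noteq> -2 \<and>
     std_nbhd (ev e \<rho>) U Ut \<epsilon> \<and>
     openin (top_of_set Rvar) V \<and> \<rho> \<in> V \<and> ev e ` V \<subseteq> U"
  have Fh: "hdc (\<lambda>p. (\<lambda>\<eta> A. \<chi> g. if g \<in> Y then A ** \<eta> $ g ** adj2 A else \<eta> $ g) (fst p) (G p)) x"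
    if "hdc G x" for G and x :: "(mat2^'a) \<times> complex"
    apply (rule hdc_vec)
    subgoal for g
      apply (cases "g \<in> Y"; simp)
       apply (rule hdc_mmult, rule hdc_mmult, rule that, rule hdc_nth[OF hdc_fst], rule hdc_adj2, rule that)
      apply (rule hdc_nth[OF hdc_fst])
      done
    done
  have FF: "(\<lambda>\<eta> A. \<chi> g. if g \<in> Y then A ** \<eta> $ g ** adj2 A else \<eta> $ g) \<eta> A =
            (\<lambda>\<eta> A. \<chi> g. if g \<in> Y then conjm A (\<eta> $ g) else \<eta> $ g) \<eta> A"
    if "\<eta> \<in> Rvar" "det A = 1" for \<eta> A
    unfolding conjm_adj2[OF that(2)] ..
  show "holo_on (\<lambda>(\<eta>, z). (\<chi> g. if g \<in> Y
                  then conjm (mexp (smat z (logS Ut (ev e \<eta>)))) (\<eta> $ g)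
                  else \<eta> $ g)) (V \<times> Pnbhd \<epsilon>)"
    using key[of "ev e \<rho>" U Ut \<epsilon> V e, OF _ _ _ Fh FF] a by simp
next
  assume a: "word_in e' (- {t}) \<and> \<rho>' \<in> Rvar \<and> trace (ev e' \<rho>') \<noteq> -2 \<and>
     std_nbhd (ev e' \<rho>') U' Ut' \<epsilon>' \<and>
     openin (top_of_set Rvar) V' \<and> \<rho>' \<in> V' \<and> ev e' ` V' \<subseteq> U'"
  have Fh: "hdc (\<lambda>p. (\<lambda>\<eta> A. \<chi> g. if g = t then \<eta> $ t ** A else \<eta> $ g) (fst p) (G p)) x"
    if "hdc G x" for G and x :: "(mat2^'b) \<times> complex"
    apply (rule hdc_vec)
    subgoal for g
      apply (cases "g = t"; simp)
       apply (rule hdc_mmult, rule hdc_nth[OF hdc_fst], rule that)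
      apply (rule hdc_nth[OF hdc_fst])
      done
    done
  show "holo_on (\<lambda>(\<eta>, z). (\<chi> g. if g = t
                  then (\<eta> $ t) ** mexp (smat z (logS Ut' (ev e' \<eta>)))
                  else \<eta> $ g)) (V' \<times> Pnbhd \<epsilon>')"
    using key[of "ev e' \<rho>'" U' Ut' \<epsilon>' V' e', OF _ _ _ Fh refl] a by simp
qed

end
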